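(* Let $T$ be a finite rooted tree in which every inner node has at least two children, with node set $V$ and leaf set $L$. Let $A,B$ be two disjoint subsets of $L$ and let $S,S'\subseteq V\setminus L$. If $(A,B)$ identifies both $S$ and $S'$, then $S=S'$.
   Context: A pair $(\pi,\sigma)$ of injective maps from $S\subseteq V\setminus L$ to $L$ identifies $S$ if for each $s\in S$, $s$ is the least common ancestor of $\pi(s)$ and $\sigma(s)$ (every node is its own ancestor). For $s\in S$, a node $x$ is $s$-requested in $(\pi,\sigma)$ if $x$ lies on the path of $T$ from $\pi(s)$ to $\sigma(s)$; the pair has unique request if every node is $s$-requested for at most one $s\in S$. A pair $(A,B)$ of disjoint subsets of $L$ identifies $S$ if there is a pair $(\pi,\sigma)$ of injective maps $S\to L$ identifying $S$ with unique request such that $\pi(S)=A$ and $\sigma(S)=B$. *)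

theory Defs
  imports Main
begin

definition rooted_tree :: "'a set \<Rightarrow> 'a \<Rightarrow> ('a \<Rightarrow> 'a) \<Rightarrow> bool" where
  "rooted_tree V r parent \<longleftrightarrow> finite V \<and> r \<in> V \<and> parent r = r \<and>
     (\<forall>v\<in>V. parent v \<in> V) \<and> (\<forall>v\<in>V. \<exists>k. (parent ^^ k) v = r)"

definition children :: "'a set \<Rightarrow> ('a \<Rightarrow> 'a) \<Rightarrow> 'a \<Rightarrow> 'a set" where
  "children V parent x = {y \<in> V. y \<noteq> x \<and> parent y = x}"

definition leaves :: "'a set \<Rightarrow> ('a \<Rightarrow> 'a) \<Rightarrow> 'a set" where
  "leaves V parent = {x \<in> V. children V parent x = {}}"

definition full_branching :: "'a set \<Rightarrow> ('a \<Rightarrow> 'a) \<Rightarrow> bool" where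
  "full_branching V parent \<longleftrightarrow>
     (\<forall>x \<in> V - leaves V parent. card (children V parent x) \<ge> 2)"

text \<open>x is an ancestor of y (every node is its own ancestor).\<close>
definition anc :: "('a \<Rightarrow> 'a) \<Rightarrow> 'a \<Rightarrow> 'a \<Rightarrow> bool" where
  "anc parent x y \<longleftrightarrow> (\<exists>k. (parent ^^ k) y = x)"

definition is_lca :: "('a \<Rightarrow> 'a) \<Rightarrow> 'a \<Rightarrow> 'a \<Rightarrow> 'a \<Rightarrow> bool" where
  "is_lca parent s a b \<longleftrightarrow> anc parent s a \<and> anc parent s b \<and>
     (\<forall>c. anc parent c a \<and> anc parent c b \<longrightarrow> anc parent c s)"

definition tree_path :: "'a set \<Rightarrow> ('a \<Rightarrow> 'a) \<Rightarrow> 'a \<Rightarrow> 'a \<Rightarrow> 'a set" where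
  "tree_path V parent a b = {x \<in> V. (anc parent x a \<or> anc parent x b) \<and>
     (\<forall>c. anc parent c a \<and> anc parent c b \<longrightarrow> anc parent c x)}"

definition maps_identify_unique :: "'a set \<Rightarrow> ('a \<Rightarrow> 'a) \<Rightarrow> 'a set \<Rightarrow> ('a \<Rightarrow> 'a) \<Rightarrow> ('a \<Rightarrow> 'a) \<Rightarrow> bool" where
  "maps_identify_unique V parent S \<pi> \<sigma> \<longleftrightarrow>
     inj_on \<pi> S \<and> inj_on \<sigma> S \<and>
     \<pi> ` S \<subseteq> leaves V parent \<and> \<sigma> ` S \<subseteq> leaves V parent \<and>
     (\<forall>s\<in>S. is_lca parent s (\<pi> s) (\<sigma> s)) \<and>
     (\<forall>x s1 s2. s1 \<in> S \<and> s2 \<in> S \<and> x \<in> tree_path V parent (\<pi> s1) (\<sigma> s1) \<and>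
        x \<in> tree_path V parent (\<pi> s2) (\<sigma> s2) \<longrightarrow> s1 = s2)"

definition pair_identifies :: "'a set \<Rightarrow> ('a \<Rightarrow> 'a) \<Rightarrow> 'a set \<Rightarrow> 'a set \<Rightarrow> 'a set \<Rightarrow> bool" where
  "pair_identifies V parent A B S \<longleftrightarrow>
     (\<exists>\<pi> \<sigma>. maps_identify_unique V parent S \<pi> \<sigma> \<and> \<pi> ` S = A \<and> \<sigma> ` S = B)"

end

theory Submission imports Defs begin
lemma anc_refl: "anc p x x"
  unfolding anc_def by (rule exI[of _ 0]) simp

lemma anc_parent: "anc p (p x) x"
  unfolding anc_def by (rule exI[of _ 1]) simp

lemma funpow_split: "(f^^(a+b)) x = (f^^a) ((f^^b) x)"
  by (simp only: funpow_add comp_apply)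

lemma anc_trans: assumes "anc p x y" "anc p y z" shows "anc p x z"
proof -
  obtain i j where "(p^^i) y = x" "(p^^j) z = y" using assms unfolding anc_def by blast
  then have "(p^^(i+j)) z = x" by (simp only: funpow_split)
  then show ?thesis unfolding anc_def by blast
qed

lemma anc_chain: assumes "anc p x z" "anc p y z" shows "anc p x y \<or> anc p y x"
proof -
  obtain i j where i: "(p^^i) z = x" and j: "(p^^j) z = y" using assms unfolding anc_def by blast
  show ?thesis
  proof (cases "i \<le> j")
    case True
    then have "(p^^((j-i)+i)) z = y" using j by simp
    then have "(p^^(j-i)) x = y" using i by (simp only: funpow_split)
    then show ?thesis unfolding anc_def by blast
  next
    case False
    then have "(p^^((i-j)+j)) z = x" using i by simp
    then have "(p^^(i-j)) y = x" using j by (simp only: funpow_split)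
    then show ?thesis unfolding anc_def by blast
  qed
qed

lemma funpow_V: assumes R: "rooted_tree V r p" and y: "y \<in> V" shows "(p^^k) y \<in> V"
proof -
  have cl: "\<forall>v\<in>V. p v \<in> V" using R unfolding rooted_tree_def by blast
  show ?thesis by (induction k) (use y cl in auto)
qed

lemma anc_V: "rooted_tree V r p \<Longrightarrow> anc p x y \<Longrightarrow> y \<in> V \<Longrightarrow> x \<in> V"
  unfolding anc_def using funpow_V[of V r p y] by auto

lemma root_fix: assumes R: "rooted_tree V r p" shows "(p^^k) r = r"
proof -
  have pr: "p r = r" using R unfolding rooted_tree_def by blast
  show ?thesis by (induction k) (use pr in auto)
qed

lemma anc_antisym:
  assumes R: "rooted_tree V r p" and y: "y \<in> V" and xy: "anc p x y" and yx: "anc p y x"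
  shows "x = y"
proof -
  obtain i j where i: "(p^^i) y = x" and j: "(p^^j) x = y" using xy yx unfolding anc_def by blast
  show ?thesis
  proof (cases "j + i = 0")
    case True then show ?thesis using i by simp
  next
    case False
    define m where "m = j + i"
    have m: "(p^^m) y = y" unfolding m_def using i j by (simp only: funpow_split)
    have mt: "(p^^(m*t)) y = y" for t
    proof (induction t)
      case 0 then show ?case by simp
    next
      case (Suc t)
      have "(p^^(m*Suc t)) y = (p^^m) ((p^^(m*t)) y)" by (simp add: funpow_add)
      then show ?case using Suc m by simp
    qed
    obtain n where n: "(p^^n) y = r" using R y unfolding rooted_tree_def by blast
    have "m \<ge> 1" using False m_def by linarith
    then have "m * n \<ge> n" using mult_le_mono1[of 1 m n] by simp
    then have "(p^^(m*n)) y = (p^^((m*n - n) + n)) y" by simp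
    also have "\<dots> = (p^^(m*n - n)) ((p^^n) y)" by (simp only: funpow_split)
    finally have "(p^^(m*n)) y = (p^^(m*n - n)) ((p^^n) y)" .
    also have "\<dots> = r" using n root_fix[OF R] by simp
    finally have yr: "y = r" using mt by simp
    then have "x = r" using i root_fix[OF R] by simp
    then show ?thesis using yr by simp
  qed
qed

lemma anc_step_down: "(p^^k) y = x \<Longrightarrow> x \<noteq> y \<Longrightarrow> \<exists>c. p c = x \<and> c \<noteq> x \<and> anc p c y"
proof (induction k arbitrary: x)
  case 0 then show ?case by simp
next
  case (Suc m)
  define z where "z = (p^^m) y"
  have pz: "p z = x" using Suc.prems z_def by simp
  show ?case
  proof (cases "z = x")
    case False
    then show ?thesis using pz z_def unfolding anc_def by blast
  next
    case True
    then show ?thesis using Suc z_def by blast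
  qed
qed

lemma anc_up: assumes "anc p x y" "x \<noteq> y" shows "anc p x (p y)"
proof -
  obtain k where k: "(p^^k) y = x" using assms unfolding anc_def by blast
  then obtain m where "k = Suc m" using assms by (cases k) auto
  then have "(p^^m) (p y) = x" using k by (simp add: funpow_Suc_right del: funpow.simps)
  then show ?thesis unfolding anc_def by blast
qed

lemma card_lemma:
  assumes fin: "finite S" and injf: "inj_on f S" and injg: "inj_on g S"
    and fA: "f ` S = A" and gB: "g ` S = B"
    and lca: "\<And>s. s \<in> S \<Longrightarrow> anc p s (f s) \<and> anc p s (g s) \<and> (\<forall>x. anc p x (f s) \<and> anc p x (g s) \<longrightarrow> anc p x s)"
    and uniq: "\<And>s1 s2. s1 \<in> S \<Longrightarrow> s2 \<in> S \<Longrightarrow> \<not> anc p c s1 \<Longrightarrow> anc p c (f s1) \<or> anc p c (g s1)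
         \<Longrightarrow> \<not> anc p c s2 \<Longrightarrow> anc p c (f s2) \<or> anc p c (g s2) \<Longrightarrow> s1 = s2"
  shows "(\<exists>s\<in>S. \<not> anc p c s \<and> anc p c (f s)) \<longleftrightarrow>
     card (B \<inter> {x. anc p c x}) < card (A \<inter> {x. anc p c x})"
proof -
  define N where "N = {s \<in> S. anc p c s}"
  define XA where "XA = {s \<in> S. \<not> anc p c s \<and> anc p c (f s)}"
  define XB where "XB = {s \<in> S. \<not> anc p c s \<and> anc p c (g s)}"
  have eA: "A \<inter> {x. anc p c x} = f ` N \<union> f ` XA"
 proof (intro equalityI subsetI)
    fix x assume x: "x \<in> A \<inter> {x. anc p c x}"
    then obtain s where s: "s \<in> S" "x = f s" using fA by blast
    show "x \<in> f ` N \<union> f ` XA"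
    proof (cases "anc p c s")
      case True then show ?thesis using s unfolding N_def by blast
    next
      case False then show ?thesis using s x unfolding XA_def by blast
    qed
  next
    fix x assume x: "x \<in> f ` N \<union> f ` XA"
    then obtain s where s: "s \<in> S" "x = f s" "anc p c s \<or> anc p c (f s)"
      unfolding N_def XA_def by blast
    have "anc p s (f s)" using lca[OF s(1)] by blast
    then have "anc p c x" using s anc_trans[of p c s "f s"] by blast
    moreover have "x \<in> A" using s fA by blast
    ultimately show "x \<in> A \<inter> {x. anc p c x}" by blast
  qed
  have eB: "B \<inter> {x. anc p c x} = g ` N \<union> g ` XB"
 proof (intro equalityI subsetI)
    fix x assume x: "x \<in> B \<inter> {x. anc p c x}"
    then obtain s where s: "s \<in> S" "x = g s" using gB by blast
    show "x \<in> g ` N \<union> g ` XB"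
    proof (cases "anc p c s")
      case True then show ?thesis using s unfolding N_def by blast
    next
      case False then show ?thesis using s x unfolding XB_def by blast
    qed
  next
    fix x assume x: "x \<in> g ` N \<union> g ` XB"
    then obtain s where s: "s \<in> S" "x = g s" "anc p c s \<or> anc p c (g s)"
      unfolding N_def XB_def by blast
    have "anc p s (g s)" using lca[OF s(1)] by blast
    then have "anc p c x" using s anc_trans[of p c s "g s"] by blast
    moreover have "x \<in> B" using s gB by blast
    ultimately show "x \<in> B \<inter> {x. anc p c x}" by blast
  qed
  have finN: "finite N" "finite XA" "finite XB" using fin unfolding N_def XA_def XB_def by auto
  have cA: "card (A \<inter> {x. anc p c x}) = card N + card XA"
  proof -
    have "f ` N \<inter> f ` XA = {}" using injf unfolding N_def XA_def inj_on_def by blast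
    then have "card (f ` N \<union> f ` XA) = card (f ` N) + card (f ` XA)"
      using finN by (simp add: card_Un_disjoint)
    also have "\<dots> = card N + card XA"
      using injf by (metis (no_types, lifting) N_def XA_def card_image inj_on_subset mem_Collect_eq subsetI)
    finally show ?thesis using eA by simp
  qed
  have cB: "card (B \<inter> {x. anc p c x}) = card N + card XB"
  proof -
    have "g ` N \<inter> g ` XB = {}" using injg unfolding N_def XB_def inj_on_def by blast
    then have "card (g ` N \<union> g ` XB) = card (g ` N) + card (g ` XB)"
      using finN by (simp add: card_Un_disjoint)
    also have "\<dots> = card N + card XB"
      using injg by (metis (no_types, lifting) N_def XB_def card_image inj_on_subset mem_Collect_eq subsetI)
    finally show ?thesis using eB by simp
  qed
  show ?thesis
  proof
    assume "\<exists>s\<in>S. \<not> anc p c s \<and> anc p c (f s)"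
    then obtain s where s: "s \<in> XA" unfolding XA_def by blast
    have "XB = {}"
    proof (rule ccontr)
      assume "XB \<noteq> {}"
      then obtain t where t: "t \<in> XB" by blast
      have "s = t" using uniq[of s t] s t unfolding XA_def XB_def by blast
      then show False using s t lca unfolding XA_def XB_def by blast
    qed
    moreover have "card XA > 0" using s finN by (auto simp: card_gt_0_iff)
    ultimately show "card (B \<inter> {x. anc p c x}) < card (A \<inter> {x. anc p c x})" using cA cB by simp
  next
    assume "card (B \<inter> {x. anc p c x}) < card (A \<inter> {x. anc p c x})"
    then have "XA \<noteq> {}" using cA cB by auto
    then show "\<exists>s\<in>S. \<not> anc p c s \<and> anc p c (f s)" unfolding XA_def by blast
  qed
qed

lemma tp_sym: "tree_path V p a b = tree_path V p b a"
  unfolding tree_path_def by (simp add: conj_commute disj_commute)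

lemma on_path:
  assumes R: "rooted_tree V r p" and L: "leaves V p \<subseteq> V"
    and lca: "is_lca p s a b" and aV: "a \<in> V"
    and ca: "anc p c a" and ns: "\<not> anc p c s"
  shows "c \<in> tree_path V p a b"
proof -
  have "c \<in> V" using anc_V[OF R ca aV] .
  moreover have "anc p s c" using anc_chain[OF ca, of s] lca ns unfolding is_lca_def by blast
  moreover have "anc p x c" if "anc p x a" "anc p x b" for x
  proof -
    have "anc p x s" using lca that unfolding is_lca_def by blast
    then show ?thesis using anc_trans[of p x s c] \<open>anc p s c\<close> by blast
  qed
  ultimately show ?thesis using ca unfolding tree_path_def by blast
qed

definition Phi :: "'a set \<Rightarrow> ('a \<Rightarrow> 'a) \<Rightarrow> 'a set \<Rightarrow> 'a set \<Rightarrow> 'a \<Rightarrow> bool" where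
  "Phi V p A B v \<longleftrightarrow> (\<exists>c1 c2. p c1 = v \<and> p c2 = v \<and>
      card (B \<inter> {x. anc p c1 x}) < card (A \<inter> {x. anc p c1 x}) \<and>
      card (A \<inter> {x. anc p c2 x}) < card (B \<inter> {x. anc p c2 x}))"

lemma charact:
  assumes R: "rooted_tree V r p"
    and SV: "S \<subseteq> V - leaves V p"
    and M: "maps_identify_unique V p S \<pi> \<sigma>" and A: "\<pi> ` S = A" and B: "\<sigma> ` S = B"
    and v: "v \<in> V"
  shows "v \<in> S \<longleftrightarrow> Phi V p A B v"
proof -
  have L: "leaves V p \<subseteq> V" unfolding leaves_def by blast
  have finS: "finite S" using R SV unfolding rooted_tree_def by (meson Diff_subset finite_subset)
  have injp: "inj_on \<pi> S" and injs: "inj_on \<sigma> S" and pl: "\<pi> ` S \<subseteq> leaves V p" and sl: "\<sigma> ` S \<subseteq> leaves V p"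
    and lca: "\<forall>s\<in>S. is_lca p s (\<pi> s) (\<sigma> s)"
    and un: "\<forall>x s1 s2. s1 \<in> S \<and> s2 \<in> S \<and> x \<in> tree_path V p (\<pi> s1) (\<sigma> s1) \<and>
        x \<in> tree_path V p (\<pi> s2) (\<sigma> s2) \<longrightarrow> s1 = s2"
    using M unfolding maps_identify_unique_def by auto
  have pV: "\<pi> s \<in> V" and sV: "\<sigma> s \<in> V" if "s \<in> S" for s using that pl sl L by auto
  have onp: "c \<in> tree_path V p (\<pi> s) (\<sigma> s)"
    if "s \<in> S" "\<not> anc p c s" "anc p c (\<pi> s) \<or> anc p c (\<sigma> s)" for s c
  proof -
    have l1: "is_lca p s (\<pi> s) (\<sigma> s)" and l2: "is_lca p s (\<sigma> s) (\<pi> s)"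
      using lca that(1) unfolding is_lca_def by auto
    show ?thesis using that on_path[OF R L l1 pV[OF that(1)]] on_path[OF R L l2 sV[OF that(1)]]
      tp_sym by metis
  qed
  have lca': "\<And>s. s \<in> S \<Longrightarrow> anc p s (\<pi> s) \<and> anc p s (\<sigma> s) \<and> (\<forall>x. anc p x (\<pi> s) \<and> anc p x (\<sigma> s) \<longrightarrow> anc p x s)"
    using lca unfolding is_lca_def by blast
  have lca'': "\<And>s. s \<in> S \<Longrightarrow> anc p s (\<sigma> s) \<and> anc p s (\<pi> s) \<and> (\<forall>x. anc p x (\<sigma> s) \<and> anc p x (\<pi> s) \<longrightarrow> anc p x s)"
    using lca unfolding is_lca_def by blast
  have uq: "s1 = s2" if "s1 \<in> S" "s2 \<in> S" "\<not> anc p c s1" "anc p c (\<pi> s1) \<or> anc p c (\<sigma> s1)"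
     "\<not> anc p c s2" "anc p c (\<pi> s2) \<or> anc p c (\<sigma> s2)" for s1 s2 c
  proof -
    have "c \<in> tree_path V p (\<pi> s1) (\<sigma> s1)" using onp that by blast
    moreover have "c \<in> tree_path V p (\<pi> s2) (\<sigma> s2)" using onp that by blast
    ultimately show ?thesis using un that(1,2) by blast
  qed
  have upA: "(\<exists>s\<in>S. \<not> anc p c s \<and> anc p c (\<pi> s)) \<longleftrightarrow>
     card (B \<inter> {x. anc p c x}) < card (A \<inter> {x. anc p c x})" for c
      apply (rule card_lemma[OF finS injp injs A B])
  subgoal for s using lca' by blast
  subgoal for s1 s2 by (rule uq[of s1 s2 c])
  done
  have upB: "(\<exists>s\<in>S. \<not> anc p c s \<and> anc p c (\<sigma> s)) \<longleftrightarrow>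
     card (A \<inter> {x. anc p c x}) < card (B \<inter> {x. anc p c x})" for c
      apply (rule card_lemma[OF finS injs injp B A])
  subgoal for s using lca'' by blast
  subgoal for s1 s2 using uq[of s1 s2 c] by blast
  done
  show ?thesis
  proof
    assume vS: "v \<in> S"
    have vnl: "v \<notin> leaves V p" using vS SV by blast
    have "\<pi> v \<in> leaves V p" using pl vS by blast
    have neq: "\<pi> v \<noteq> v" "\<sigma> v \<noteq> v" using pl sl vS vnl by auto
    obtain k1 where k1: "(p^^k1) (\<pi> v) = v" using lca' vS unfolding anc_def by blast
    obtain c1 where c1: "p c1 = v" "c1 \<noteq> v" "anc p c1 (\<pi> v)" using anc_step_down[OF k1] neq by metis
    obtain k2 where k2: "(p^^k2) (\<sigma> v) = v" using lca' vS unfolding anc_def by blast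
    obtain c2 where c2: "p c2 = v" "c2 \<noteq> v" "anc p c2 (\<sigma> v)" using anc_step_down[OF k2] neq by metis
    have "\<not> anc p c1 v" using anc_antisym[OF R v, of c1] anc_parent[of p c1] c1 by blast
    then have "card (B \<inter> {x. anc p c1 x}) < card (A \<inter> {x. anc p c1 x})" using upA c1 vS by blast
    moreover have "\<not> anc p c2 v" using anc_antisym[OF R v, of c2] anc_parent[of p c2] c2 by blast
    then have "card (A \<inter> {x. anc p c2 x}) < card (B \<inter> {x. anc p c2 x})" using upB c2 vS by blast
    ultimately show "Phi V p A B v" unfolding Phi_def using c1 c2 by blast
  next
    assume "Phi V p A B v"
    then obtain c1 c2 where c: "p c1 = v" "p c2 = v"
      "card (B \<inter> {x. anc p c1 x}) < card (A \<inter> {x. anc p c1 x})"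
      "card (A \<inter> {x. anc p c2 x}) < card (B \<inter> {x. anc p c2 x})" unfolding Phi_def by blast
    obtain s1 where s1: "s1 \<in> S" "\<not> anc p c1 s1" "anc p c1 (\<pi> s1)" using upA c(3) by blast
    obtain s2 where s2: "s2 \<in> S" "\<not> anc p c2 s2" "anc p c2 (\<sigma> s2)" using upB c(4) by blast
    have vc1: "anc p v c1" using anc_parent[of p c1] c by simp
    have vc2: "anc p v c2" using anc_parent[of p c2] c by simp
    have s1v: "anc p s1 v"
    proof -
      have "anc p s1 c1" using anc_chain[OF s1(3), of s1] lca' s1 by blast
      moreover have "s1 \<noteq> c1" using s1 anc_refl by metis
      ultimately show ?thesis using anc_up c(1) by metis
    qed
    have s2v: "anc p s2 v"
    proof -
      have "anc p s2 c2" using anc_chain[OF s2(3), of s2] lca' s2 by blast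
      moreover have "s2 \<noteq> c2" using s2 anc_refl by metis
      ultimately show ?thesis using anc_up c(2) by metis
    qed
    have p1: "v \<in> tree_path V p (\<pi> s1) (\<sigma> s1)"
    proof -
      have "anc p x v" if "anc p x (\<pi> s1)" "anc p x (\<sigma> s1)" for x
      proof -
        have "anc p x s1" using lca'[OF s1(1)] that by blast
        then show ?thesis using anc_trans[of p x s1 v] s1v by blast
      qed
      moreover have "anc p v (\<pi> s1)" using anc_trans[of p v c1 "\<pi> s1"] vc1 s1(3) by blast
      ultimately show ?thesis unfolding tree_path_def using v by blast
    qed
    have p2: "v \<in> tree_path V p (\<pi> s2) (\<sigma> s2)"
    proof -
      have "anc p x v" if "anc p x (\<pi> s2)" "anc p x (\<sigma> s2)" for x
      proof -
        have "anc p x s2" using lca'[OF s2(1)] that by blast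
        then show ?thesis using anc_trans[of p x s2 v] s2v by blast
      qed
      moreover have "anc p v (\<sigma> s2)" using anc_trans[of p v c2 "\<sigma> s2"] vc2 s2(3) by blast
      ultimately show ?thesis unfolding tree_path_def using v by blast
    qed
    have "s1 = s2" using un p1 p2 s1 s2 by blast
    moreover have "anc p v (\<pi> s1)" using anc_trans[of p v c1 "\<pi> s1"] vc1 s1(3) by blast
    moreover have "anc p v (\<sigma> s1)" using anc_trans[of p v c2 "\<sigma> s2"] vc2 s2(3) \<open>s1 = s2\<close> by blast
    ultimately have "anc p v s1" using lca'[OF s1(1)] by blast
    then have "v = s1" using anc_antisym[OF R v s1v] by simp
    then show "v \<in> S" using s1 by simp
  qed
qed

theorem lemma3p6:
  fixes V :: "'a set" and r :: 'a and parent :: "'a \<Rightarrow> 'a"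
    and A B S S' :: "'a set"
  assumes "rooted_tree V r parent"
    and "full_branching V parent"
    and "A \<subseteq> leaves V parent" and "B \<subseteq> leaves V parent" and "A \<inter> B = {}"
    and "S \<subseteq> V - leaves V parent" and "S' \<subseteq> V - leaves V parent"
    and "pair_identifies V parent A B S"
    and "pair_identifies V parent A B S'"
  shows "S = S'"
proof -
  obtain \<pi> \<sigma> where m: "maps_identify_unique V parent S \<pi> \<sigma>" "\<pi> ` S = A" "\<sigma> ` S = B"
    using assms(8) unfolding pair_identifies_def by blast
  obtain \<pi>' \<sigma>' where m': "maps_identify_unique V parent S' \<pi>' \<sigma>'" "\<pi>' ` S' = A" "\<sigma>' ` S' = B"
    using assms(9) unfolding pair_identifies_def by blast
  have "S = {v \<in> V. Phi V parent A B v}"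
    using charact[OF assms(1) assms(6) m] assms(6) by blast
  moreover have "S' = {v \<in> V. Phi V parent A B v}"
    using charact[OF assms(1) assms(7) m'] assms(7) by blast
  ultimately show ?thesis by simp
qed

end
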